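(* Let $P$ be a discrete Dubins path, let $e=ab$ be an inflection edge of $P$ (traversed from $a$ to $b$) and let $bc$ be the edge of $P$ following $e$. Call a vector $T$ admissible for $e$ if the ray from $b$ in direction $T$ points into the (open) side of the supporting line of $e$ on which $bc$ lies. For a vector $T$, let $P(T)$ be the path obtained from $P$ by rigidly translating the part of $P$ starting from $b$ by $T$ and replacing the edge $ab$ by the segment from $a$ to $b+T$. Then for every vector $T$ admissible for $e$ there exists $\varepsilon>0$ such that $P(\varepsilon T)$ is a discrete curvature-constrained path.
   Context: Fix an angle $\theta$ with $0\le\theta\le\pi/2$ such that $2\pi/\theta$ is an integer, and a length $\ell>0$. For a polygonal path, the turn at an internal vertex is the angle in $[0,\pi]$ between the direction of the incoming edge and the direction of the outgoing edge. An edge is short if its length is $<\ell$, normal if $=\ell$, long if $>\ell$. An edge $e$ with an adjacent edge at each end is an inflection edge if its two adjacent edges lie on opposite sides of the supporting line of $e$, and non-inflection otherwise. A discrete curvature-constrained path is a polygonal path such that: (i) the turn at every internal vertex is at most $\theta$; (ii) no two adjacent edges are both short; (iii) for every short non-inflection edge $ab$ with adjacent edges $a^-a$ and $bb^+$, the angle between the directions $\overrightarrow{a^-a}$ and $\overrightarrow{bb^+}$ is at most $\theta$. A configuration is a pair $(u,U)$ of a point $u$ and a vector $U$ of length $\ell$. A polygonal path $P$ with first vertex $u$ starts at $(u,U)$ if prepending the segment from $u-U$ to $u$ (the pre-edge) yields a discrete curvature-constrained path; $P$ with last vertex $v$ ends at $(v,V)$ if appending the segment from $v$ to $v+V$ (the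 post-edge) yields a discrete curvature-constrained path. A discrete Dubins path is a discrete curvature-constrained path of minimum length among all those starting at a given configuration $\mathcal U$ and ending at a given configuration $\mathcal V$. Standing assumption: paths make a non-zero turn at every internal vertex. *)

theory Defs
  imports "HOL-Analysis.Analysis"
begin

text \<open>The plane is modelled by the complex numbers. A polygonal path is the list of its
vertices; its edges join consecutive vertices.\<close>

definition vangle :: "complex \<Rightarrow> complex \<Rightarrow> real" where
  "vangle x y = arccos (inner x y / (norm x * norm y))"

definition cross2 :: "complex \<Rightarrow> complex \<Rightarrow> real" where
  "cross2 x y = Re x * Im y - Im x * Re y"

definition short_edge :: "real \<Rightarrow> complex \<Rightarrow> complex \<Rightarrow> bool" where
  "short_edge l a b \<longleftrightarrow> dist a b < l"

definition inflection :: "complex \<Rightarrow> complex \<Rightarrow> complex \<Rightarrow> complex \<Rightarrow> bool" where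
  "inflection p q r s \<longleftrightarrow> cross2 (r - q) (p - q) * cross2 (r - q) (s - q) < 0"

definition dcc :: "real \<Rightarrow> real \<Rightarrow> complex list \<Rightarrow> bool" where
  "dcc \<theta> l P \<longleftrightarrow>
     length P \<ge> 2 \<and>
     (\<forall>i. Suc i < length P \<longrightarrow> P ! i \<noteq> P ! Suc i) \<and>
     (\<forall>i. i + 2 < length P \<longrightarrow>
        vangle (P ! (i+1) - P ! i) (P ! (i+2) - P ! (i+1)) \<le> \<theta>) \<and>
     (\<forall>i. i + 2 < length P \<longrightarrow>
        \<not> (short_edge l (P ! i) (P ! (i+1)) \<and> short_edge l (P ! (i+1)) (P ! (i+2)))) \<and>
     (\<forall>j. j + 3 < length P \<longrightarrow> short_edge l (P ! (j+1)) (P ! (j+2)) \<longrightarrow>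
        \<not> inflection (P ! j) (P ! (j+1)) (P ! (j+2)) (P ! (j+3)) \<longrightarrow>
        vangle (P ! (j+1) - P ! j) (P ! (j+3) - P ! (j+2)) \<le> \<theta>)"

definition path_length :: "complex list \<Rightarrow> real" where
  "path_length P = (\<Sum>i < length P - 1. dist (P ! i) (P ! Suc i))"

definition starts_at :: "real \<Rightarrow> real \<Rightarrow> complex list \<Rightarrow> complex \<Rightarrow> complex \<Rightarrow> bool" where
  "starts_at \<theta> l P u U \<longleftrightarrow> P \<noteq> [] \<and> hd P = u \<and> dcc \<theta> l ((u - U) # P)"

definition ends_at :: "real \<Rightarrow> real \<Rightarrow> complex list \<Rightarrow> complex \<Rightarrow> complex \<Rightarrow> bool" where
  "ends_at \<theta> l P v V \<longleftrightarrow> P \<noteq> [] \<and> last P = v \<and> dcc \<theta> l (P @ [v + V])"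

definition dubins ::
  "real \<Rightarrow> real \<Rightarrow> complex \<Rightarrow> complex \<Rightarrow> complex \<Rightarrow> complex \<Rightarrow> complex list \<Rightarrow> bool" where
  "dubins \<theta> l u U v V P \<longleftrightarrow>
     norm U = l \<and> norm V = l \<and>
     dcc \<theta> l P \<and> starts_at \<theta> l P u U \<and> ends_at \<theta> l P v V \<and>
     (\<forall>Q. dcc \<theta> l Q \<and> starts_at \<theta> l Q u U \<and> ends_at \<theta> l Q v V \<longrightarrow>
          path_length P \<le> path_length Q)"

definition nonzero_turns :: "complex list \<Rightarrow> bool" where
  "nonzero_turns P \<longleftrightarrow>
     (\<forall>i. i + 2 < length P \<longrightarrow> vangle (P ! (i+1) - P ! i) (P ! (i+2) - P ! (i+1)) > 0)"

definition admissible :: "complex \<Rightarrow> complex \<Rightarrow> complex \<Rightarrow> complex \<Rightarrow> bool" where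
  "admissible a b c T \<longleftrightarrow> cross2 (b - a) T * cross2 (b - a) (c - b) > 0"

text \<open>P(T) for the edge from P!i to P!(i+1): translate vertices from index i+1 on by T.\<close>
definition translate_from :: "complex list \<Rightarrow> nat \<Rightarrow> complex \<Rightarrow> complex list" where
  "translate_from P i T = take (Suc i) P @ map (\<lambda>p. p + T) (drop (Suc i) P)"

end

theory Submission
  imports Defs
begin

lemma nsq: "norm (x::complex)^2 = Re x ^2 + Im x ^2" by (simp add: cmod_power2)

lemma I1: "inner x y ^2 + cross2 x y ^2 = norm x ^2 * norm (y::complex) ^2"
  unfolding nsq by (simp add: cross2_def inner_complex_def power2_eq_square algebra_simps)
lemma I2: "norm y^2 * inner x z - inner x y * inner y z = cross2 y x * cross2 (y::complex) z"
  unfolding nsq by (simp add: cross2_def inner_complex_def power2_eq_square algebra_simps)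
lemma I3: "cross2 x0 x2 * norm x1^2 = inner x1 x2 * cross2 x0 x1 + cross2 x1 x2 * inner x0 (x1::complex)"
  unfolding nsq by (simp add: cross2_def inner_complex_def power2_eq_square algebra_simps)
lemma I4: "inner x0 x2 * norm x1^2 = inner x0 x1 * inner x1 x2 - cross2 x0 x1 * cross2 x1 (x2::complex)"
  unfolding nsq by (simp add: cross2_def inner_complex_def power2_eq_square algebra_simps)
lemma cross_add: "cross2 x (y + z) = cross2 x y + cross2 x z" "cross2 (y+z) x = cross2 y x + cross2 z x"
  by (simp_all add: cross2_def algebra_simps)
lemma cross_scale: "cross2 x (c *\<^sub>R y) = c * cross2 x y" "cross2 (c *\<^sub>R y) x = c * cross2 y x"
  by (simp_all add: cross2_def algebra_simps)
lemma cross_anti: "cross2 x y = - cross2 y x" by (simp add: cross2_def)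
lemma cross_self: "cross2 x x = 0" by (simp add: cross2_def)
lemma cross_minus: "cross2 x (-y) = - cross2 x y" "cross2 (-y) x = - cross2 y x" by (simp_all add: cross2_def)

lemma nderiv: assumes "(y::complex) \<noteq> 0"
  shows "((\<lambda>t. norm (y + t *\<^sub>R z)) has_real_derivative inner (sgn y) z) (at 0)"
proof -
  have d1: "((\<lambda>t. y + t *\<^sub>R z) has_derivative (\<lambda>h. h *\<^sub>R z)) (at (0::real))"
    by (auto intro!: derivative_eq_intros)
  have d2: "(norm has_derivative (\<lambda>h. inner h (sgn y))) (at (y + 0 *\<^sub>R z))"
    using has_derivative_norm[of y] assms by simp
  have "((\<lambda>t. norm (y + t *\<^sub>R z)) has_derivative (\<lambda>h. inner (h *\<^sub>R z) (sgn y))) (at 0)"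
    using has_derivative_compose[OF d1 d2] by (simp add: o_def)
  moreover have "(\<lambda>h. inner (h *\<^sub>R z) (sgn y)) = (*) (inner (sgn y) z)"
    by (auto simp: inner_commute)
  ultimately show ?thesis
    by (simp add: has_field_derivative_def)
qed

lemma cos_bounds: "-1 \<le> inner x y / (norm x * norm (y::complex))" "inner x y / (norm x * norm (y::complex)) \<le> 1"
proof -
  have cs: "\<bar>inner x y\<bar> \<le> norm x * norm y" by (rule Cauchy_Schwarz_ineq2)
  have "\<bar>inner x y / (norm x * norm y)\<bar> \<le> 1"
  proof (cases "norm x * norm y = 0")
    case True then show ?thesis by (cases "x = 0") auto
  next
    case False
    then have "norm x * norm y > 0" by (simp add: zero_less_mult_iff)
    then have q: "\<bar>inner x y / (norm x * norm y)\<bar> = \<bar>inner x y\<bar> / (norm x * norm y)"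
      by (simp only: abs_divide abs_of_pos)
    show ?thesis unfolding q using cs \<open>norm x * norm y > 0\<close> by (simp only: divide_le_eq_1_pos)
  qed
  then have "inner x y / (norm x * norm y) \<le> 1 \<and> - (inner x y / (norm x * norm y)) \<le> 1"
    by (simp only: abs_le_iff)
  then show "-1 \<le> inner x y / (norm x * norm (y::complex))" "inner x y / (norm x * norm (y::complex)) \<le> 1"
    by linarith+
qed

lemma vangle_commute: "vangle x y = vangle y x"
  by (simp add: vangle_def inner_commute mult.commute)

lemma vangle_scale: assumes "c > 0" "c' > 0"
  shows "vangle (c *\<^sub>R x) (c' *\<^sub>R y) = vangle x y"
proof -
  have "inner (c *\<^sub>R x) (c' *\<^sub>R y) / (norm (c *\<^sub>R x) * norm (c' *\<^sub>R y)) = inner x y / (norm x * norm y)"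
    using assms by (simp add: field_simps)
  then show ?thesis by (simp add: vangle_def)
qed

lemma vangle_inner: assumes "vangle x y \<le> pi/2" shows "inner x y \<ge> 0"
proof (rule ccontr)
  assume "\<not> inner x y \<ge> 0"
  then have neg: "inner x y < 0" by simp
  then have "x \<noteq> 0" "y \<noteq> 0" by auto
  then have "norm x * norm y > 0" by simp
  then have "inner x y / (norm x * norm y) < 0" using neg by (simp add: divide_neg_pos)
  then have "arccos 0 < arccos (inner x y / (norm x * norm y))"
    using cos_bounds[of x y] by (intro arccos_less_arccos) auto
  then show False using assms by (simp add: vangle_def)
qed

lemma cross_ne_vangle: assumes "x \<noteq> 0" "y \<noteq> 0" "0 < vangle x y" "vangle x y < pi"
  shows "cross2 x y \<noteq> 0"
proof
  assume c: "cross2 x y = 0"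
  have "inner x y ^2 = (norm x * norm y)^2" using I1[of x y] c by (simp add: power_mult_distrib)
  then have "\<bar>inner x y\<bar> = norm x * norm y"
    by (metis abs_of_nonneg norm_ge_zero power2_eq_iff_nonneg zero_le_mult_iff abs_ge_zero power2_abs)
  moreover have pos: "norm x * norm y > 0" using assms by simp
  ultimately have "inner x y / (norm x * norm y) = 1 \<or> inner x y / (norm x * norm y) = -1"
  proof (cases "inner x y \<ge> 0")
    case True
    then have "inner x y = norm x * norm y" using \<open>\<bar>inner x y\<bar> = norm x * norm y\<close> by simp
    then show ?thesis using pos assms(1,2) by simp
  next
    case False
    then have "inner x y = - (norm x * norm y)" using \<open>\<bar>inner x y\<bar> = norm x * norm y\<close> by simp
    then show ?thesis using pos assms(1,2) by simp
  qed
  then show False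
  proof
    assume h: "inner x y / (norm x * norm y) = 1"
    have "vangle x y = arccos 1" unfolding vangle_def h ..
    then show False using assms(3) by simp
  next
    assume h: "inner x y / (norm x * norm y) = -1"
    have "vangle x y = arccos (-1)" unfolding vangle_def h ..
    then show False using assms(4) by simp
  qed
qed

lemma ev_ne: "(y::complex) \<noteq> 0 \<Longrightarrow> eventually (\<lambda>t. y + t *\<^sub>R z \<noteq> 0) (at_right 0)"
proof -
  assume y: "y \<noteq> 0"
  have "((\<lambda>t. y + t *\<^sub>R z) \<longlongrightarrow> y + 0 *\<^sub>R z) (at_right (0::real))"
    by (intro tendsto_intros)
  from tendsto_imp_eventually_ne[OF this, of 0] y show ?thesis by simp
qed

lemma ev_cross: "cross2 x y \<noteq> 0 \<Longrightarrow> eventually (\<lambda>t. cross2 x (y + t *\<^sub>R z) * cross2 x y > 0) (at_right 0)"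
proof -
  assume c: "cross2 x y \<noteq> 0"
  have "((\<lambda>t. cross2 x (y + t *\<^sub>R z) * cross2 x y) \<longlongrightarrow> (cross2 x y + 0 * cross2 x z) * cross2 x y) (at_right (0::real))"
    unfolding cross_add cross_scale by (intro tendsto_intros)
  moreover have "(cross2 x y + 0 * cross2 x z) * cross2 x y > 0" using c by (auto simp: zero_less_mult_iff)
  ultimately show ?thesis by (rule order_tendstoD)
qed

lemma vmono: assumes x: "x \<noteq> 0" and y: "y \<noteq> 0" and r: "cross2 y x * cross2 y z > 0"
  shows "eventually (\<lambda>t. vangle x (y + t *\<^sub>R z) \<le> vangle x y) (at_right 0)"
proof -
  define h where "h t = inner x (y + t *\<^sub>R z) * norm y - inner x y * norm (y + t *\<^sub>R z)" for t
  have "(h has_real_derivative (inner x z * norm y - inner x y * inner (sgn y) z)) (at 0)"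
    unfolding h_def
    by (rule derivative_eq_intros nderiv[OF y] | simp add: inner_add_right)+
  moreover have "inner x z * norm y - inner x y * inner (sgn y) z = (cross2 y x * cross2 y z) / norm y"
  proof -
    have "inner (sgn y) z = inner y z / norm y" by (simp add: sgn_div_norm inner_scaleR_left divide_inverse mult.commute)
    then have "inner x z * norm y - inner x y * inner (sgn y) z = (norm y ^2 * inner x z - inner x y * inner y z) / norm y"
      using y by (simp add: field_simps power2_eq_square)
    then show ?thesis using I2 by simp
  qed
  moreover have "(cross2 y x * cross2 y z) / norm y > 0" using r y by simp
  ultimately obtain d where d: "d > 0" "\<And>t. t > 0 \<Longrightarrow> t < d \<Longrightarrow> h 0 < h (0 + t)"
    using DERIV_pos_inc_right by metis
  have "eventually (\<lambda>t. h 0 < h t) (at_right 0)"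
    unfolding eventually_at_right_field using d by auto
  moreover have "eventually (\<lambda>t. y + t *\<^sub>R z \<noteq> 0) (at_right 0)" by (rule ev_ne[OF y])
  ultimately show ?thesis
  proof eventually_elim
    case (elim t)
    let ?y = "y + t *\<^sub>R z"
    have "inner x y * norm ?y < inner x ?y * norm y" using elim(1) by (simp add: h_def)
    then have "inner x y / (norm x * norm y) < inner x ?y / (norm x * norm ?y)"
      using x y elim(2) by (simp add: field_simps)
    then show ?case unfolding vangle_def using cos_bounds[of x y] cos_bounds[of x ?y]
      by (intro arccos_le_arccos) auto
  qed
qed

lemma pos_prod_cancel: "(s::real) * a > 0 \<Longrightarrow> s * b > 0 \<Longrightarrow> a * b > 0"
  by (auto simp: zero_less_mult_iff)

lemma rot3: assumes x1: "x1 \<noteq> 0" and x2: "x2 \<noteq> 0" and i01: "inner x0 x1 \<ge> 0" and i12: "inner x1 x2 \<ge> 0"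
  and i02: "inner x0 x2 \<ge> 0" and ni: "cross2 x0 x1 * cross2 x1 x2 \<ge> 0"
  and r: "cross2 x0 x1 * cross2 x0 z > 0"
shows "cross2 x0 x2 * cross2 x0 z > 0"
proof -
  define s where "s = cross2 x0 x1"
  have s0: "s \<noteq> 0" using r s_def by auto
  have n1: "norm x1 ^2 > 0" using x1 by simp
  have eq: "s * cross2 x0 x2 * norm x1 ^2 = inner x1 x2 * s^2 + (s * cross2 x1 x2) * inner x0 x1"
    using I3[of x0 x2 x1] unfolding s_def by (simp add: power2_eq_square algebra_simps)
  have t1: "inner x1 x2 * s^2 \<ge> 0" using i12 by simp
  have t2: "(s * cross2 x1 x2) * inner x0 x1 \<ge> 0" using ni i01 s_def by simp
  have "s * cross2 x0 x2 * norm x1 ^2 > 0"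
  proof (rule ccontr)
    assume "\<not> ?thesis"
    then have z: "inner x1 x2 * s^2 = 0" "(s * cross2 x1 x2) * inner x0 x1 = 0" using eq t1 t2 by linarith+
    then have i12z: "inner x1 x2 = 0" using s0 by simp
    have "cross2 x1 x2 ^2 = norm x1 ^2 * norm x2 ^2" using I1[of x1 x2] i12z by simp
    then have c12: "cross2 x1 x2 \<noteq> 0" using x1 x2 by auto
    then have i01z: "inner x0 x1 = 0" using z s0 by simp
    have "s * cross2 x1 x2 > 0" using ni c12 s0 s_def
      by (metis less_eq_real_def mult_eq_0_iff)
    then have "inner x0 x2 * norm x1 ^2 < 0" using I4[of x0 x2 x1] i01z s_def by simp
    then show False using i02 n1 by (simp add: mult_less_0_iff)
  qed
  then have "s * cross2 x0 x2 > 0" using n1 by (simp add: zero_less_mult_iff)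
  then show ?thesis using r s_def pos_prod_cancel by blast
qed

definition Ed :: "complex list \<Rightarrow> nat \<Rightarrow> complex" where
  "Ed R k = R ! Suc k - R ! k"

definition infl3 :: "complex \<Rightarrow> complex \<Rightarrow> complex \<Rightarrow> bool" where
  "infl3 a b c \<longleftrightarrow> cross2 a b * cross2 b c < 0"

lemma inflection_Ed: "inflection p q r s \<longleftrightarrow> infl3 (q - p) (r - q) (s - r)"
proof -
  have 1: "cross2 (r - q) (p - q) = cross2 (q - p) (r - q)" by (simp add: cross2_def algebra_simps)
  have 2: "cross2 (r - q) (s - q) = cross2 (r - q) (s - r)" by (simp add: cross2_def algebra_simps)
  show ?thesis unfolding inflection_def infl3_def 1 2 ..
qed

lemma short_Ed: "short_edge l (R ! k) (R ! Suc k) \<longleftrightarrow> norm (Ed R k) < l"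
  by (simp add: short_edge_def Ed_def dist_norm norm_minus_commute)

lemma dcc_Ed: "dcc \<theta> l R \<longleftrightarrow>
  length R \<ge> 2 \<and>
  (\<forall>k. Suc k < length R \<longrightarrow> Ed R k \<noteq> 0) \<and>
  (\<forall>k. Suc (Suc k) < length R \<longrightarrow> vangle (Ed R k) (Ed R (Suc k)) \<le> \<theta>) \<and>
  (\<forall>k. Suc (Suc k) < length R \<longrightarrow> \<not> (norm (Ed R k) < l \<and> norm (Ed R (Suc k)) < l)) \<and>
  (\<forall>k. Suc (Suc (Suc k)) < length R \<longrightarrow> norm (Ed R (Suc k)) < l \<longrightarrow>
      \<not> infl3 (Ed R k) (Ed R (Suc k)) (Ed R (Suc (Suc k))) \<longrightarrow>
      vangle (Ed R k) (Ed R (Suc (Suc k))) \<le> \<theta>)"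
proof -
  have a: "(R ! k \<noteq> R ! Suc k) = (Ed R k \<noteq> 0)" for k by (auto simp: Ed_def)
  have b: "short_edge l (R ! (Suc k)) (R ! Suc (Suc k)) \<longleftrightarrow> norm (Ed R (Suc k)) < l" for k
    by (rule short_Ed)
  show ?thesis
    unfolding dcc_def a short_Ed inflection_Ed
    by (simp add: Ed_def[symmetric] add.commute[of _ 1] add.commute[of _ 2] add.commute[of _ 3]
        numeral_2_eq_2 numeral_3_eq_3 short_Ed)
qed

definition rel :: "real \<Rightarrow> real \<Rightarrow> complex \<Rightarrow> nat \<Rightarrow> complex list \<Rightarrow> complex list \<Rightarrow> bool" where
  "rel l t z m R R' \<longleftrightarrow> length R' = length R \<and>
     (\<forall>k. Suc k < length R \<longrightarrow>
        (if k = m then Ed R' k = Ed R m + t *\<^sub>R z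
         else (\<exists>c>0. Ed R' k = c *\<^sub>R Ed R k \<and> (c < 1 \<longrightarrow> norm (Ed R k) < l))))"

lemma sgn1: "(a::real) * a0 > 0 \<Longrightarrow> b * b0 > 0 \<Longrightarrow> a0 * b0 < 0 \<Longrightarrow> a * b < 0"
  by (auto simp: zero_less_mult_iff mult_less_0_iff)
lemma sgn2: "(a::real) * b \<ge> 0 \<Longrightarrow> a * a0 > 0 \<Longrightarrow> a0 * b \<ge> 0"
  by (auto simp: zero_less_mult_iff zero_le_mult_iff)
lemma sgn3: "(b::real) * a \<ge> 0 \<Longrightarrow> a * a0 > 0 \<Longrightarrow> b * a0 \<ge> 0"
  by (auto simp: zero_less_mult_iff zero_le_mult_iff)

lemma vangle_scale_r: "c > 0 \<Longrightarrow> vangle x (c *\<^sub>R y) = vangle x y"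
  using vangle_scale[of 1 c x y] by simp
lemma vangle_scale_l: "c > 0 \<Longrightarrow> vangle (c *\<^sub>R x) y = vangle x y"
  using vangle_scale[of c 1 x y] by simp

lemma infl3_scale: "a > 0 \<Longrightarrow> b > 0 \<Longrightarrow> c > 0 \<Longrightarrow> infl3 (a *\<^sub>R x) (b *\<^sub>R y) (c *\<^sub>R w) = infl3 x y w"
proof -
  assume p: "a > 0" "b > 0" "c > 0"
  have "cross2 (a *\<^sub>R x) (b *\<^sub>R y) * cross2 (b *\<^sub>R y) (c *\<^sub>R w) = (a * b * b * c) * (cross2 x y * cross2 y w)"
    by (simp add: cross_scale)
  moreover have "a * b * b * c > 0" using p by simp
  moreover have "(K * X < 0) = (X < 0)" if "K > 0" for K X :: real using that by (simp add: mult_less_0_iff)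
  ultimately show ?thesis unfolding infl3_def by metis
qed

lemma ev_cross': "cross2 y x \<noteq> 0 \<Longrightarrow> eventually (\<lambda>t. cross2 (y + t *\<^sub>R z) x * cross2 y x > 0) (at_right 0)"
proof -
  assume "cross2 y x \<noteq> 0"
  then have "cross2 x y \<noteq> 0" using cross_anti[of y x] by simp
  from ev_cross[OF this, of z] show ?thesis
    by eventually_elim (metis cross_anti mult_minus_left mult_minus_right)
qed

lemma gen:
  assumes dR: "dcc \<theta> l R" and th: "\<theta> \<le> pi/2" and m1: "1 \<le> m" and mn: "m + 2 < length R"
    and infl: "infl3 (Ed R (m-1)) (Ed R m) (Ed R (Suc m))"
    and r1: "cross2 (Ed R m) (Ed R (m-1)) * cross2 (Ed R m) z > 0"
    and r2: "cross2 (Ed R m) (Ed R (Suc m)) * cross2 (Ed R m) z > 0"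
    and sd: "(\<forall>t>0. norm (Ed R m) \<le> norm (Ed R m + t *\<^sub>R z)) \<or>
             (\<not> norm (Ed R (m-1)) < l \<and> \<not> norm (Ed R (Suc m)) < l)"
  shows "eventually (\<lambda>t. \<forall>R'. rel l t z m R R' \<longrightarrow> dcc \<theta> l R') (at_right 0)"
proof -
  define n where "n = length R"
  define e where "e = Ed R"
  obtain p where p: "m = Suc p" using m1 by (cases m) auto
  have pm: "m - 1 = p" using p by simp
  note D = dR[unfolded dcc_Ed, folded n_def e_def]
  have nz: "e k \<noteq> 0" if "Suc k < n" for k using D that by blast
  have turn: "vangle (e k) (e (Suc k)) \<le> \<theta>" if "Suc (Suc k) < n" for k using D that by blast
  have pair: "\<not> (norm (e k) < l \<and> norm (e (Suc k)) < l)" if "Suc (Suc k) < n" for k using D that by blast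
  have iii: "vangle (e k) (e (Suc (Suc k))) \<le> \<theta>" if "Suc (Suc (Suc k)) < n" "norm (e (Suc k)) < l"
    "\<not> infl3 (e k) (e (Suc k)) (e (Suc (Suc k)))" for k using D that by blast
  have inn: "inner (e k) (e (Suc k)) \<ge> 0" if "Suc (Suc k) < n" for k
    using turn[OF that] th by (intro vangle_inner) simp
  have mn': "Suc (Suc m) < n" using mn n_def by simp
  have infl': "infl3 (e p) (e m) (e (Suc m))" using infl pm e_def by simp
  have r1': "cross2 (e m) (e p) * cross2 (e m) z > 0" using r1 pm e_def by simp
  have r2': "cross2 (e m) (e (Suc m)) * cross2 (e m) z > 0" using r2 e_def by simp
  have c1: "cross2 (e p) (e m) \<noteq> 0" and c2: "cross2 (e m) (e (Suc m)) \<noteq> 0"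
    using infl' unfolding infl3_def by auto
  have ev1: "eventually (\<lambda>t. e m + t *\<^sub>R z \<noteq> 0) (at_right 0)"
    by (rule ev_ne) (use nz mn' in auto)
  have ev2: "eventually (\<lambda>t. vangle (e p) (e m + t *\<^sub>R z) \<le> vangle (e p) (e m)) (at_right 0)"
    by (rule vmono) (use nz mn' r1' p in auto)
  have ev3: "eventually (\<lambda>t. vangle (e m + t *\<^sub>R z) (e (Suc m)) \<le> vangle (e m) (e (Suc m))) (at_right 0)"
    using vmono[of "e (Suc m)" "e m" z] nz mn' r2' cross_anti[of "e m" "e (Suc m)"]
    by (auto simp: vangle_commute)
  have ev4: "eventually (\<lambda>t. cross2 (e p) (e m + t *\<^sub>R z) * cross2 (e p) (e m) > 0) (at_right 0)"
    by (rule ev_cross[OF c1])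
  have ev5: "eventually (\<lambda>t. cross2 (e m + t *\<^sub>R z) (e (Suc m)) * cross2 (e m) (e (Suc m)) > 0) (at_right 0)"
    by (rule ev_cross'[OF c2])
  define C6 where "C6 = (1 \<le> p \<and> norm (e p) < l \<and> \<not> infl3 (e (p - 1)) (e p) (e m))"
  define C7 where "C7 = (Suc (Suc (Suc m)) < n \<and> norm (e (Suc m)) < l \<and> \<not> infl3 (e m) (e (Suc m)) (e (Suc (Suc m))))"
  have ev6: "eventually (\<lambda>t. C6 \<longrightarrow> vangle (e (p - 1)) (e m + t *\<^sub>R z) \<le> vangle (e (p - 1)) (e m)) (at_right 0)"
  proof (cases C6)
    case True
    then obtain q where q: "p = Suc q" unfolding C6_def by (cases p) auto
    have nq: "\<not> infl3 (e q) (e p) (e m)" and sp: "norm (e p) < l" using True q unfolding C6_def by auto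
    have v: "vangle (e q) (e m) \<le> \<theta>" using iii[of q] nq sp q p mn' by simp
    have "cross2 (e m) (e q) * cross2 (e m) z > 0"
    proof (rule rot3[of "e p" "e q" "e m" z])
      show "e p \<noteq> 0" "e q \<noteq> 0" using nz mn' p q by auto
      show "inner (e m) (e p) \<ge> 0" using inn[of p] mn' p by (simp add: inner_commute)
      show "inner (e p) (e q) \<ge> 0" using inn[of q] mn' p q by (simp add: inner_commute)
      show "inner (e m) (e q) \<ge> 0" using v th by (intro vangle_inner) (simp add: vangle_commute)
      show "cross2 (e m) (e p) * cross2 (e p) (e q) \<ge> 0"
        using nq unfolding infl3_def by (simp add: cross_anti[of "e m"] cross_anti[of "e p" "e q"] mult.commute)
      show "cross2 (e m) (e p) * cross2 (e m) z > 0" by (rule r1')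
    qed
    then have "eventually (\<lambda>t. vangle (e q) (e m + t *\<^sub>R z) \<le> vangle (e q) (e m)) (at_right 0)"
      by (intro vmono) (use nz mn' p q in auto)
    then show ?thesis using q by simp
  qed simp
  have ev7: "eventually (\<lambda>t. C7 \<longrightarrow> vangle (e m + t *\<^sub>R z) (e (Suc (Suc m))) \<le> vangle (e m) (e (Suc (Suc m)))) (at_right 0)"
  proof (cases C7)
    case True
    have nq: "\<not> infl3 (e m) (e (Suc m)) (e (Suc (Suc m)))" and sp: "norm (e (Suc m)) < l"
      and n3: "Suc (Suc (Suc m)) < n" using True unfolding C7_def by auto
    have v: "vangle (e m) (e (Suc (Suc m))) \<le> \<theta>" using iii[of m] nq sp n3 by simp
    have "cross2 (e m) (e (Suc (Suc m))) * cross2 (e m) z > 0"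
    proof (rule rot3[of "e (Suc m)" "e (Suc (Suc m))" "e m" z])
      show "e (Suc m) \<noteq> 0" "e (Suc (Suc m)) \<noteq> 0" using nz n3 by auto
      show "inner (e m) (e (Suc m)) \<ge> 0" using inn[of m] mn' by simp
      show "inner (e (Suc m)) (e (Suc (Suc m))) \<ge> 0" using inn[of "Suc m"] n3 by simp
      show "inner (e m) (e (Suc (Suc m))) \<ge> 0" using v th by (intro vangle_inner) simp
      show "cross2 (e m) (e (Suc m)) * cross2 (e (Suc m)) (e (Suc (Suc m))) \<ge> 0"
        using nq unfolding infl3_def by simp
      show "cross2 (e m) (e (Suc m)) * cross2 (e m) z > 0" by (rule r2')
    qed
    then have "eventually (\<lambda>t. vangle (e (Suc (Suc m))) (e m + t *\<^sub>R z) \<le> vangle (e (Suc (Suc m))) (e m)) (at_right 0)"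
      using cross_anti[of "e m" "e (Suc (Suc m))"] by (intro vmono) (use nz n3 mn' in auto)
    then show ?thesis by (simp add: vangle_commute)
  qed simp
  show ?thesis
    using ev1 ev2 ev3 ev4 ev5 ev6 ev7 eventually_at_right_less[of "0::real"]
  proof eventually_elim
    case (elim t)
    note ne = elim(1) and v2 = elim(2) and v3 = elim(3) and s4 = elim(4) and s5 = elim(5)
      and v6 = elim(6) and v7 = elim(7) and tpos = elim(8)
    show ?case
    proof (intro allI impI)
      fix R' assume rl: "rel l t z m R R'"
      define e' where "e' = Ed R'"
      have len: "length R' = n" using rl n_def unfolding rel_def by simp
      have "if m = m then Ed R' m = Ed R m + t *\<^sub>R z
         else (\<exists>c>0. Ed R' m = c *\<^sub>R Ed R m \<and> (c < 1 \<longrightarrow> norm (Ed R m) < l))"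
      proof -
        have sm: "Suc m < length R" using mn' n_def by simp
        have "\<forall>k. Suc k < length R \<longrightarrow> (if k = m then Ed R' k = Ed R m + t *\<^sub>R z
         else (\<exists>c>0. Ed R' k = c *\<^sub>R Ed R k \<and> (c < 1 \<longrightarrow> norm (Ed R k) < l)))"
          using rl unfolding rel_def by blast
        then show ?thesis using sm by blast
      qed
      then have em: "e' m = e m + t *\<^sub>R z" unfolding e'_def e_def by simp
      have ex: "\<exists>c. Suc k < n \<and> k \<noteq> m \<longrightarrow> (c > 0 \<and> e' k = c *\<^sub>R e k \<and> (c < 1 \<longrightarrow> norm (e k) < l))" for k
      proof (cases "Suc k < n \<and> k \<noteq> m")
        case True
        then have "if k = m then Ed R' k = Ed R m + t *\<^sub>R z
         else (\<exists>c>0. Ed R' k = c *\<^sub>R Ed R k \<and> (c < 1 \<longrightarrow> norm (Ed R k) < l))"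
          using rl n_def unfolding rel_def by blast
        then have "\<exists>c>0. Ed R' k = c *\<^sub>R Ed R k \<and> (c < 1 \<longrightarrow> norm (Ed R k) < l)"
          using True by simp
        then show ?thesis unfolding e'_def e_def by blast
      qed blast
      have "\<forall>k. \<exists>c. Suc k < n \<and> k \<noteq> m \<longrightarrow> (c > 0 \<and> e' k = c *\<^sub>R e k \<and> (c < 1 \<longrightarrow> norm (e k) < l))"
        using ex by blast
      from choice[OF this] obtain c where c0: "\<forall>k. Suc k < n \<and> k \<noteq> m \<longrightarrow> (c k > 0 \<and> e' k = c k *\<^sub>R e k \<and> (c k < 1 \<longrightarrow> norm (e k) < l))"
        by blast
      have c: "c k > 0 \<and> e' k = c k *\<^sub>R e k \<and> (c k < 1 \<longrightarrow> norm (e k) < l)" if "Suc k < n" "k \<noteq> m" for k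
        using c0 that by blast
      have nz': "e' k \<noteq> 0" if "Suc k < n" for k
      proof (cases "k = m")
        case True then show ?thesis using em ne by simp
      next
        case False then show ?thesis using c[OF that False] nz[OF that] by auto
      qed
      have sh': "norm (e k) < l" if "Suc k < n" "k \<noteq> m" "norm (e' k) < l" for k
      proof (cases "c k < 1")
        case True then show ?thesis using c[OF that(1,2)] by blast
      next
        case False
        then have "norm (e' k) = c k * norm (e k)" using c[OF that(1,2)] by simp
        also have "\<dots> \<ge> norm (e k)" using False by (simp add: mult_le_cancel_right1)
        finally show ?thesis using that(3) by linarith
      qed
      have shm: "norm (e m) < l \<or> (\<not> norm (e p) < l \<and> \<not> norm (e (Suc m)) < l)" if "norm (e' m) < l"
      proof (cases "\<forall>t>0. norm (Ed R m) \<le> norm (Ed R m + t *\<^sub>R z)")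
        case True
        then have "norm (e m) \<le> norm (e' m)" using em tpos unfolding e_def by simp
        then show ?thesis using that by simp
      next
        case False
        then show ?thesis using sd[unfolded pm] unfolding e_def by blast
      qed
      have cm: "c k > 0" "e' k = c k *\<^sub>R e k" if "Suc k < n" "k \<noteq> m" for k using c[OF that] by auto
      show "dcc \<theta> l R'"
        unfolding dcc_Ed len[folded e'_def] e'_def[symmetric]
      proof (intro conjI allI impI)
        show "2 \<le> n" using mn' by simp
        show "\<And>k. Suc k < n \<Longrightarrow> e' k \<noteq> 0" by (rule nz')
      next
        fix k assume k: "Suc (Suc k) < n"
        show "vangle (e' k) (e' (Suc k)) \<le> \<theta>"
        proof -
          consider "k = m" | "k = p" | "k \<noteq> m" "k \<noteq> p" by blast
          then show ?thesis
          proof cases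
            case 1
            then have "vangle (e' k) (e' (Suc k)) = vangle (e m + t *\<^sub>R z) (e (Suc m))"
              using cm[of "Suc m"] k em by (simp add: vangle_scale_r)
            then show ?thesis using v3 turn[of m] k 1 by simp
          next
            case 2
            then have "vangle (e' k) (e' (Suc k)) = vangle (e p) (e m + t *\<^sub>R z)"
              using cm[of p] k em p by (simp add: vangle_scale_l)
            then show ?thesis using v2 turn[of p] k 2 p by simp
          next
            case 3
            then have "Suc k \<noteq> m" using p by simp
            then have "vangle (e' k) (e' (Suc k)) = vangle (e k) (e (Suc k))"
              using cm[of k] cm[of "Suc k"] k 3 by (simp add: vangle_scale_l vangle_scale_r)
            then show ?thesis using turn[OF k] by simp
          qed
        qed
        show "\<not> (norm (e' k) < l \<and> norm (e' (Suc k)) < l)"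
        proof
          assume a: "norm (e' k) < l \<and> norm (e' (Suc k)) < l"
          consider "k = m" | "k = p" | "k \<noteq> m" "k \<noteq> p" by blast
          then show False
          proof cases
            case 1
            have "norm (e (Suc m)) < l" using sh'[of "Suc m"] a k 1 by simp
            then show False using shm a 1 pair[of m] k by auto
          next
            case 2
            have "norm (e p) < l" using sh'[of p] a k 2 p by simp
            then show False using shm a 2 pair[of p] k p by auto
          next
            case 3
            then have "Suc k \<noteq> m" using p by simp
            then show False using sh'[of k] sh'[of "Suc k"] a 3 k pair[OF k] by auto
          qed
        qed
      next
        fix k assume k: "Suc (Suc (Suc k)) < n" and shk: "norm (e' (Suc k)) < l"
          and ni: "\<not> infl3 (e' k) (e' (Suc k)) (e' (Suc (Suc k)))"
        show "vangle (e' k) (e' (Suc (Suc k))) \<le> \<theta>"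
        proof -
          consider "k = p" | "k = m" | "Suc (Suc k) = m" | "k \<noteq> p" "k \<noteq> m" "Suc (Suc k) \<noteq> m" by blast
          then show ?thesis
          proof cases
            case 1
            have "infl3 (e' k) (e' (Suc k)) (e' (Suc (Suc k)))"
            proof -
              have "infl3 (e' k) (e' (Suc k)) (e' (Suc (Suc k))) =
                    infl3 (c p *\<^sub>R e p) (1 *\<^sub>R (e m + t *\<^sub>R z)) (c (Suc m) *\<^sub>R e (Suc m))"
                using cm[of p] cm[of "Suc m"] em 1 p k by simp
              also have "\<dots> = infl3 (e p) (e m + t *\<^sub>R z) (e (Suc m))"
                using cm[of p] cm[of "Suc m"] 1 p k by (intro infl3_scale) auto
              also have "\<dots>" unfolding infl3_def
                using sgn1[OF s4 s5] infl' unfolding infl3_def by simp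
              finally show ?thesis .
            qed
            then show ?thesis using ni by simp
          next
            case 2
            have sS: "norm (e (Suc m)) < l" using sh'[of "Suc m"] shk k 2 by simp
            have "\<not> infl3 (1 *\<^sub>R (e m + t *\<^sub>R z)) (c (Suc m) *\<^sub>R e (Suc m)) (c (Suc (Suc m)) *\<^sub>R e (Suc (Suc m)))"
              using ni cm[of "Suc m"] cm[of "Suc (Suc m)"] em 2 k by simp
            then have "\<not> infl3 (e m + t *\<^sub>R z) (e (Suc m)) (e (Suc (Suc m)))"
              using cm[of "Suc m"] cm[of "Suc (Suc m)"] 2 k by (subst (asm) infl3_scale) auto
            then have h: "cross2 (e m + t *\<^sub>R z) (e (Suc m)) * cross2 (e (Suc m)) (e (Suc (Suc m))) \<ge> 0"
              unfolding infl3_def by simp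
            have "\<not> infl3 (e m) (e (Suc m)) (e (Suc (Suc m)))"
              using sgn2[OF h s5] unfolding infl3_def by simp
            then have C: C7 unfolding C7_def using sS k 2 by simp
            have "vangle (e' k) (e' (Suc (Suc k))) = vangle (e m + t *\<^sub>R z) (e (Suc (Suc m)))"
              using cm[of "Suc (Suc m)"] k em 2 by (simp add: vangle_scale_r)
            also have "\<dots> \<le> vangle (e m) (e (Suc (Suc m)))" using v7 C by simp
            also have "\<dots> \<le> \<theta>" using iii[of m] k 2 sS \<open>\<not> infl3 (e m) (e (Suc m)) (e (Suc (Suc m)))\<close> by simp
            finally show ?thesis .
          next
            case 3
            then have kp: "Suc k = p" "1 \<le> p" "p - 1 = k" using p by auto
            have sP: "norm (e p) < l" using sh'[of p] shk k kp p by simp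
            have "\<not> infl3 (c k *\<^sub>R e k) (c p *\<^sub>R e p) (1 *\<^sub>R (e m + t *\<^sub>R z))"
              using ni cm[of k] cm[of p] em kp k p by simp
            then have "\<not> infl3 (e k) (e p) (e m + t *\<^sub>R z)"
              using cm[of k] cm[of p] kp k p by (subst (asm) infl3_scale) auto
            then have h: "cross2 (e k) (e p) * cross2 (e p) (e m + t *\<^sub>R z) \<ge> 0"
              unfolding infl3_def by simp
            have "\<not> infl3 (e k) (e p) (e m)"
              using sgn3[OF h s4] unfolding infl3_def by simp
            then have C: C6 unfolding C6_def using sP kp by simp
            have "vangle (e' k) (e' (Suc (Suc k))) = vangle (e k) (e m + t *\<^sub>R z)"
              using cm[of k] k em kp p by (simp add: vangle_scale_l)
            also have "\<dots> \<le> vangle (e k) (e m)" using v6 C kp by simp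
            also have "\<dots> \<le> \<theta>" using iii[of k] k kp p sP \<open>\<not> infl3 (e k) (e p) (e m)\<close> by simp
            finally show ?thesis .
          next
            case 4
            then have ne: "Suc k \<noteq> m" using p by auto
            have sk: "norm (e (Suc k)) < l" using sh'[of "Suc k"] shk k ne by simp
            have "\<not> infl3 (c k *\<^sub>R e k) (c (Suc k) *\<^sub>R e (Suc k)) (c (Suc (Suc k)) *\<^sub>R e (Suc (Suc k)))"
              using ni cm[of k] cm[of "Suc k"] cm[of "Suc (Suc k)"] k 4 ne by simp
            then have "\<not> infl3 (e k) (e (Suc k)) (e (Suc (Suc k)))"
              using cm[of k] cm[of "Suc k"] cm[of "Suc (Suc k)"] k 4 ne by (subst (asm) infl3_scale) auto
            then have "vangle (e k) (e (Suc (Suc k))) \<le> \<theta>" using iii[of k] k sk by simp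
            moreover have "vangle (e' k) (e' (Suc (Suc k))) = vangle (e k) (e (Suc (Suc k)))"
              using cm[of k] cm[of "Suc (Suc k)"] k 4 by (simp add: vangle_scale_l vangle_scale_r)
            ultimately show ?thesis by simp
          qed
        qed
      qed
    qed
  qed
qed

lemma Ed_cons: "Ed (x # R) (Suc k) = Ed R k" by (simp add: Ed_def)
lemma Ed_snoc: "Suc k < length R \<Longrightarrow> Ed (R @ [y]) k = Ed R k" by (simp add: Ed_def nth_append)

lemma pl_Ed: "path_length R = (\<Sum>k<length R - 1. norm (Ed R k))"
  unfolding path_length_def Ed_def by (simp add: dist_norm norm_minus_commute)

lemma relI:
  assumes "length R' = length R"
    and "\<And>k. Suc k < length R \<Longrightarrow> k = m \<Longrightarrow> Ed R' k = Ed R m + t *\<^sub>R z"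
    and "\<And>k. Suc k < length R \<Longrightarrow> k \<noteq> m \<Longrightarrow> \<exists>c>0. Ed R' k = c *\<^sub>R Ed R k \<and> (c < 1 \<longrightarrow> norm (Ed R k) < l)"
  shows "rel l t z m R R'"
  unfolding rel_def using assms by auto

lemma relD:
  assumes "rel l t z m R R'"
  shows "length R' = length R"
    and "\<And>k. Suc k < length R \<Longrightarrow> k = m \<Longrightarrow> Ed R' k = Ed R m + t *\<^sub>R z"
    and "\<And>k. Suc k < length R \<Longrightarrow> k \<noteq> m \<Longrightarrow> \<exists>c>0. Ed R' k = c *\<^sub>R Ed R k \<and> (c < 1 \<longrightarrow> norm (Ed R k) < l)"
  using assms unfolding rel_def by auto

lemma ex1: "Ed R' k = Ed R k \<Longrightarrow> \<exists>c>0. Ed R' k = c *\<^sub>R Ed R k \<and> (c < 1 \<longrightarrow> norm (Ed R k) < l)"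
  by (rule exI[of _ 1]) simp

lemma rel_cons: assumes r: "rel l t z m R R'" and h: "R' ! 0 = R ! 0"
  shows "rel l t z (Suc m) (x # R) (x # R')"
proof (rule relI)
  show "length (x # R') = length (x # R)" using relD(1)[OF r] by simp
next
  fix k assume k: "Suc k < length (x # R)" "k = Suc m"
  then show "Ed (x # R') k = Ed (x # R) (Suc m) + t *\<^sub>R z" using relD(2)[OF r, of m] by (simp add: Ed_cons)
next
  fix k assume k: "Suc k < length (x # R)" "k \<noteq> Suc m"
  show "\<exists>c>0. Ed (x # R') k = c *\<^sub>R Ed (x # R) k \<and> (c < 1 \<longrightarrow> norm (Ed (x # R) k) < l)"
  proof (cases k)
    case 0
    then show ?thesis using h by (intro ex1) (simp add: Ed_def)
  next
    case (Suc j)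
    then show ?thesis using relD(3)[OF r, of j] k by (simp add: Ed_cons)
  qed
qed

lemma rel_snoc: assumes r: "rel l t z m R R'" and sm: "Suc m < length R"
  and h: "R' ! (length R - 1) = R ! (length R - 1)"
  shows "rel l t z m (R @ [y]) (R' @ [y])"
proof (rule relI)
  have len: "length R' = length R" using relD(1)[OF r] .
  show "length (R' @ [y]) = length (R @ [y])" using len by simp
next
  fix k assume k: "Suc k < length (R @ [y])" "k = m"
  then show "Ed (R' @ [y]) k = Ed (R @ [y]) m + t *\<^sub>R z"
    using relD(2)[OF r, of m] sm relD(1)[OF r] by (simp add: Ed_snoc)
next
  fix k assume k: "Suc k < length (R @ [y])" "k \<noteq> m"
  have len: "length R' = length R" using relD(1)[OF r] .
  show "\<exists>c>0. Ed (R' @ [y]) k = c *\<^sub>R Ed (R @ [y]) k \<and> (c < 1 \<longrightarrow> norm (Ed (R @ [y]) k) < l)"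
  proof (cases "Suc k < length R")
    case True
    then show ?thesis using relD(3)[OF r, of k] k len by (simp add: Ed_snoc)
  next
    case False
    then have kk: "k = length R - 1" "k < length R" "Suc k = length R" using k by auto
    then show ?thesis using h len by (intro ex1) (simp add: Ed_def nth_append)
  qed
qed

lemma strict_tri: assumes "cross2 x y \<noteq> 0" shows "norm (x + y) < norm x + norm (y::complex)"
proof -
  have sq: "norm (x + y) ^2 = norm x ^2 + 2 * inner x y + norm y ^2"
    unfolding nsq by (simp add: inner_complex_def power2_eq_square algebra_simps)
  have "cross2 x y ^2 > 0" using assms by simp
  then have "inner x y ^2 < (norm x * norm y) ^2"
    using I1[of x y] unfolding power_mult_distrib by linarith
  then have "inner x y < norm x * norm y"
    by (metis abs_ge_self abs_mult abs_norm_cancel order_le_less_trans power2_less_imp_less norm_ge_zero zero_le_mult_iff)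
  then have "norm (x + y) ^2 < (norm x + norm y) ^2" unfolding sq by (simp add: power2_eq_square algebra_simps)
  then show ?thesis by (rule power2_less_imp_less) simp
qed

lemma norm_grow: assumes "inner y z \<ge> 0" "t \<ge> 0" shows "norm y \<le> norm (y + t *\<^sub>R (z::complex))"
proof -
  have "norm (y + t *\<^sub>R z) ^2 = norm y ^2 + 2 * t * inner y z + t^2 * norm z ^2"
    unfolding nsq by (simp add: inner_complex_def power2_eq_square algebra_simps)
  also have "\<dots> \<ge> norm y ^2" using assms by simp
  finally have "norm y ^2 \<le> norm (y + t *\<^sub>R z) ^2" .
  from power2_le_imp_le[OF this] show ?thesis by simp
qed

lemma sum2: fixes f g :: "nat \<Rightarrow> real"
  assumes "a \<noteq> b" "a < N" "b < N" "\<And>k. k < N \<Longrightarrow> k \<noteq> a \<Longrightarrow> k \<noteq> b \<Longrightarrow> g k = f k"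
    "g a + g b < f a + f b"
  shows "(\<Sum>k<N. g k) < (\<Sum>k<N. f k)"
proof -
  have A: "(\<Sum>k<N. h k) = h a + h b + (\<Sum>k\<in>{..<N} - {a} - {b}. h k)" for h :: "nat \<Rightarrow> real"
  proof -
    have "(\<Sum>k<N. h k) = h a + (\<Sum>k\<in>{..<N} - {a}. h k)" using assms(2) by (simp add: sum.remove)
    also have "(\<Sum>k\<in>{..<N} - {a}. h k) = h b + (\<Sum>k\<in>{..<N} - {a} - {b}. h k)"
      using assms(1,3) by (simp add: sum.remove)
    finally show ?thesis by simp
  qed
  have "(\<Sum>k\<in>{..<N} - {a} - {b}. g k) = (\<Sum>k\<in>{..<N} - {a} - {b}. f k)"
    using assms(4) by (intro sum.cong) auto
  then show ?thesis unfolding A[of g] A[of f] using assms(5) by simp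
qed

lemma ev_lt1: "eventually (\<lambda>t. t < (1::real)) (at_right 0)"
  unfolding eventually_at_right_field by (auto intro!: exI[of _ 1])

lemma slide_contra:
  assumes dub: "dubins \<theta> l u U v V P" and th: "\<theta> \<le> pi/2" and m1: "1 \<le> m" and mn: "m + 2 < length P"
    and infl: "infl3 (Ed P (m-1)) (Ed P m) (Ed P (Suc m))"
    and r1: "cross2 (Ed P m) (Ed P (m-1)) * cross2 (Ed P m) z > 0"
    and r2: "cross2 (Ed P m) (Ed P (Suc m)) * cross2 (Ed P m) z > 0"
    and sd: "\<forall>t>0. norm (Ed P m) \<le> norm (Ed P m + t *\<^sub>R z)"
    and Q: "\<And>t. 0 < t \<Longrightarrow> t < 1 \<Longrightarrow> rel l t z m P (Q t) \<and> Q t ! 0 = P ! 0 \<and>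
              Q t ! (length P - 1) = P ! (length P - 1) \<and> path_length (Q t) < path_length P"
  shows False
proof -
  have dP: "dcc \<theta> l P" and dS: "dcc \<theta> l ((u - U) # P)" and hdP: "hd P = u" and Pne: "P \<noteq> []"
    and dE: "dcc \<theta> l (P @ [v + V])" and lastP: "last P = v"
    and mini: "\<And>Q. dcc \<theta> l Q \<and> starts_at \<theta> l Q u U \<and> ends_at \<theta> l Q v V \<Longrightarrow> path_length P \<le> path_length Q"
    using dub unfolding dubins_def starts_at_def ends_at_def by auto
  obtain p where p: "m = Suc p" using m1 by (cases m) auto
  have g1: "eventually (\<lambda>t. \<forall>R'. rel l t z m P R' \<longrightarrow> dcc \<theta> l R') (at_right 0)"
    by (rule gen[OF dP th m1 mn infl r1 r2]) (use sd in blast)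
  have g2: "eventually (\<lambda>t. \<forall>R'. rel l t z (Suc m) ((u - U) # P) R' \<longrightarrow> dcc \<theta> l R') (at_right 0)"
  proof (rule gen[OF dS th])
    show "1 \<le> Suc m" "Suc m + 2 < length ((u - U) # P)" using mn by auto
    show "infl3 (Ed ((u - U) # P) (Suc m - 1)) (Ed ((u - U) # P) (Suc m)) (Ed ((u - U) # P) (Suc (Suc m)))"
      using infl p by (simp add: Ed_cons)
    show "cross2 (Ed ((u - U) # P) (Suc m)) (Ed ((u - U) # P) (Suc m - 1)) * cross2 (Ed ((u - U) # P) (Suc m)) z > 0"
      using r1 p by (simp add: Ed_cons)
    show "cross2 (Ed ((u - U) # P) (Suc m)) (Ed ((u - U) # P) (Suc (Suc m))) * cross2 (Ed ((u - U) # P) (Suc m)) z > 0"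
      using r2 p by (simp add: Ed_cons)
    show "(\<forall>t>0. norm (Ed ((u - U) # P) (Suc m)) \<le> norm (Ed ((u - U) # P) (Suc m) + t *\<^sub>R z)) \<or>
      (\<not> norm (Ed ((u - U) # P) (Suc m - 1)) < l \<and> \<not> norm (Ed ((u - U) # P) (Suc (Suc m))) < l)"
      using sd by (simp add: Ed_cons)
  qed
  have e3: "Ed (P @ [v + V]) k = Ed P k" if "k \<le> Suc m" for k
    using that mn by (intro Ed_snoc) simp
  have g3: "eventually (\<lambda>t. \<forall>R'. rel l t z m (P @ [v + V]) R' \<longrightarrow> dcc \<theta> l R') (at_right 0)"
  proof (rule gen[OF dE th m1])
    show "m + 2 < length (P @ [v + V])" using mn by simp
    show "infl3 (Ed (P @ [v + V]) (m - 1)) (Ed (P @ [v + V]) m) (Ed (P @ [v + V]) (Suc m))"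
      using infl by (simp add: e3)
    show "cross2 (Ed (P @ [v + V]) m) (Ed (P @ [v + V]) (m - 1)) * cross2 (Ed (P @ [v + V]) m) z > 0"
      using r1 by (simp add: e3)
    show "cross2 (Ed (P @ [v + V]) m) (Ed (P @ [v + V]) (Suc m)) * cross2 (Ed (P @ [v + V]) m) z > 0"
      using r2 by (simp add: e3)
    show "(\<forall>t>0. norm (Ed (P @ [v + V]) m) \<le> norm (Ed (P @ [v + V]) m + t *\<^sub>R z)) \<or>
      (\<not> norm (Ed (P @ [v + V]) (m - 1)) < l \<and> \<not> norm (Ed (P @ [v + V]) (Suc m)) < l)"
      using sd by (simp add: e3)
  qed
  have "eventually (\<lambda>t. (\<forall>R'. rel l t z m P R' \<longrightarrow> dcc \<theta> l R') \<and>
      (\<forall>R'. rel l t z (Suc m) ((u - U) # P) R' \<longrightarrow> dcc \<theta> l R') \<and>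
      (\<forall>R'. rel l t z m (P @ [v + V]) R' \<longrightarrow> dcc \<theta> l R') \<and> 0 < t \<and> t < 1) (at_right 0)"
    using g1 g2 g3 eventually_at_right_less[of "0::real"] ev_lt1 by eventually_elim auto
  then obtain t where t: "\<forall>R'. rel l t z m P R' \<longrightarrow> dcc \<theta> l R'"
      "\<forall>R'. rel l t z (Suc m) ((u - U) # P) R' \<longrightarrow> dcc \<theta> l R'"
      "\<forall>R'. rel l t z m (P @ [v + V]) R' \<longrightarrow> dcc \<theta> l R'" "0 < t" "t < 1"
    using eventually_happens[of _ "at_right (0::real)"] trivial_limit_at_right_real by blast
  note q = Q[OF t(4,5)]
  have len: "length (Q t) = length P" using relD(1) q by blast
  have d1: "dcc \<theta> l (Q t)" using t(1) q by blast
  have d2: "dcc \<theta> l ((u - U) # Q t)" using t(2) rel_cons[of l t z m P "Q t"] q by blast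
  have d3: "dcc \<theta> l (Q t @ [v + V])"
    using t(3) rel_snoc[of l t z m P "Q t"] q mn by auto
  have Qne: "Q t \<noteq> []" using len Pne by auto
  have "hd (Q t) = u" using Qne Pne hdP q by (simp add: hd_conv_nth)
  moreover have "last (Q t) = v" using Qne Pne lastP q len by (simp add: last_conv_nth)
  ultimately have "path_length P \<le> path_length (Q t)"
    using mini[of "Q t"] d1 d2 d3 Qne unfolding starts_at_def ends_at_def by blast
  then show False using q by simp
qed

lemma Ed_upd: "Suc k < length P \<Longrightarrow> Ed (P[j := x]) k = (if Suc k = j then x else P ! Suc k) - (if k = j then x else P ! k)"
  by (simp add: Ed_def nth_list_update)

lemma translate_nth: assumes "j < length P" "i < length P"
  shows "translate_from P i X ! j = (if j \<le> i then P ! j else P ! j + X)"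
proof -
  have lt: "length (take (Suc i) P) = Suc i" using assms by simp
  show ?thesis
  proof (cases "j \<le> i")
    case True then show ?thesis unfolding translate_from_def using lt by (simp add: nth_append)
  next
    case False
    then have "translate_from P i X ! j = map (\<lambda>p. p + X) (drop (Suc i) P) ! (j - Suc i)"
      unfolding translate_from_def using lt by (simp add: nth_append)
    also have "\<dots> = P ! j + X" using False assms by simp
    finally show ?thesis using False by simp
  qed
qed

lemma length_translate: "i < length P \<Longrightarrow> length (translate_from P i X) = length P"
  by (simp add: translate_from_def)

theorem lemma3:
  fixes \<theta> l :: real and u U v V T :: complex and P :: "complex list" and i :: nat
  assumes "0 \<le> \<theta>" "\<theta> \<le> pi / 2" "2 * pi / \<theta> \<in> \<int>" "l > 0"
    and "dubins \<theta> l u U v V P"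
    and "nonzero_turns P"
    and "1 \<le> i" "i + 2 < length P"
    and "inflection (P ! (i - 1)) (P ! i) (P ! (i + 1)) (P ! (i + 2))"
    and "admissible (P ! i) (P ! (i + 1)) (P ! (i + 2)) T"
  shows "\<exists>\<epsilon>>0. dcc \<theta> l (translate_from P i (\<epsilon> *\<^sub>R T))"
proof -
  note th = assms(2)
  have dP: "dcc \<theta> l P" using assms(5) unfolding dubins_def by blast
  define n where "n = length P"
  define e where "e = Ed P"
  obtain p where ip: "i = Suc p" using assms(7) by (cases i) auto
  have iN: "Suc (Suc i) < n" using assms(8) n_def by simp
  note D = dP[unfolded dcc_Ed, folded n_def e_def]
  have nz: "e k \<noteq> 0" if "Suc k < n" for k using D that by blast
  have turn: "vangle (e k) (e (Suc k)) \<le> \<theta>" if "Suc (Suc k) < n" for k using D that by blast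
  have inn: "inner (e k) (e (Suc k)) \<ge> 0" if "Suc (Suc k) < n" for k
    using turn[OF that] th by (intro vangle_inner) simp
  have infl: "infl3 (e p) (e i) (e (Suc i))"
    using assms(9) unfolding inflection_Ed e_def Ed_def ip by (simp add: numeral_2_eq_2)
  have adm: "cross2 (e i) T * cross2 (e i) (e (Suc i)) > 0"
    using assms(10) unfolding admissible_def e_def Ed_def by (simp add: numeral_2_eq_2)
  have cA: "cross2 (e i) (e p) * cross2 (e i) (e (Suc i)) > 0"
    using infl unfolding infl3_def using cross_anti[of "e i" "e p"] by simp
  have cp: "cross2 (e i) (e p) \<noteq> 0" and cs: "cross2 (e i) (e (Suc i)) \<noteq> 0" using cA by auto
  have ip0: "inner (e i) (e p) \<ge> 0" using inn[of p] iN ip by (simp add: inner_commute)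
  have ii0: "inner (e i) (e (Suc i)) \<ge> 0" using inn[of i] iN by simp
  have pl: "path_length R = (\<Sum>k<n - 1. norm (Ed R k))" if "length R = n" for R
    using pl_Ed[of R] that by simp
  have infl0: "infl3 (Ed P (i - 1)) (Ed P i) (Ed P (Suc i))" using infl ip e_def by simp
  have s1: "\<not> norm (e p) < l"
  proof
    assume sh: "norm (e p) < l"
    define Q where "Q t = P[i := P ! i - t *\<^sub>R e p]" for t
    show False
    proof (rule slide_contra[OF assms(5) th assms(7) assms(8) infl0, of "e p" Q])
      show "cross2 (Ed P i) (Ed P (i - 1)) * cross2 (Ed P i) (e p) > 0"
        using cp ip e_def by (auto simp: zero_less_mult_iff)
      show "cross2 (Ed P i) (Ed P (Suc i)) * cross2 (Ed P i) (e p) > 0"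
        using cA e_def by (simp add: mult.commute)
      show "\<forall>t>0. norm (Ed P i) \<le> norm (Ed P i + t *\<^sub>R e p)"
        using norm_grow[OF ip0] e_def by simp
    next
      fix t :: real assume t: "0 < t" "t < 1"
      have EQ: "Ed (Q t) k = (if k = i then e i + t *\<^sub>R e p else if k = p then (1 - t) *\<^sub>R e p else e k)"
        if "Suc k < n" for k
        using that ip unfolding Q_def e_def n_def
        by (auto simp: Ed_upd Ed_def algebra_simps)
      have lQ: "length (Q t) = n" unfolding Q_def n_def by simp
      show "rel l t (e p) i P (Q t) \<and> Q t ! 0 = P ! 0 \<and>
          Q t ! (length P - 1) = P ! (length P - 1) \<and> path_length (Q t) < path_length P"
      proof (intro conjI)
        show "rel l t (e p) i P (Q t)"
        proof (rule relI)
          show "length (Q t) = length P" using lQ n_def by simp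
          show "Ed (Q t) k = Ed P i + t *\<^sub>R e p" if "Suc k < length P" "k = i" for k
            using EQ[of k] that n_def e_def by simp
          show "\<exists>c>0. Ed (Q t) k = c *\<^sub>R Ed P k \<and> (c < 1 \<longrightarrow> norm (Ed P k) < l)"
            if "Suc k < length P" "k \<noteq> i" for k
          proof (cases "k = p")
            case True
            then show ?thesis using EQ[of k] that t sh n_def e_def ip
              by (intro exI[of _ "1 - t"]) auto
          next
            case False
            then show ?thesis using EQ[of k] that n_def e_def by (intro ex1) simp
          qed
        qed
        show "Q t ! 0 = P ! 0" using ip unfolding Q_def by simp
        show "Q t ! (length P - 1) = P ! (length P - 1)" using iN n_def unfolding Q_def by simp
        have "(\<Sum>k<n - 1. norm (Ed (Q t) k)) < (\<Sum>k<n - 1. norm (e k))"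
        proof (rule sum2[of p i])
          show "p \<noteq> i" "p < n - 1" "i < n - 1" using ip iN by auto
          show "norm (Ed (Q t) k) = norm (e k)" if "k < n - 1" "k \<noteq> p" "k \<noteq> i" for k
            using EQ[of k] that by simp
          have "cross2 (e i) (t *\<^sub>R e p) \<noteq> 0" using cp t by (simp add: cross_scale)
          then have h1: "norm (e i + t *\<^sub>R e p) < norm (e i) + norm (t *\<^sub>R e p)" by (rule strict_tri)
          have h2: "norm (t *\<^sub>R e p) = t * norm (e p)" using t by simp
          have "Suc p < n" "p \<noteq> i" using iN ip by auto
          then have h3a: "Ed (Q t) p = (1 - t) *\<^sub>R e p" using EQ[of p] by presburger
          have h3: "norm (Ed (Q t) p) = norm (e p) - t * norm (e p)" unfolding h3a using t by (simp add: left_diff_distrib)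
          have h4: "Ed (Q t) i = e i + t *\<^sub>R e p" using EQ[of i] iN by simp
          show "norm (Ed (Q t) p) + norm (Ed (Q t) i) < norm (e p) + norm (e i)"
            unfolding h3 h4 using h1 h2 by linarith
        qed
        then show "path_length (Q t) < path_length P" using pl[OF lQ] pl[of P] n_def e_def by simp
      qed
    qed
  qed
  have s2: "\<not> norm (e (Suc i)) < l"
  proof
    assume sh: "norm (e (Suc i)) < l"
    define Q where "Q t = P[Suc i := P ! Suc i + t *\<^sub>R e (Suc i)]" for t
    show False
    proof (rule slide_contra[OF assms(5) th assms(7) assms(8) infl0, of "e (Suc i)" Q])
      show "cross2 (Ed P i) (Ed P (i - 1)) * cross2 (Ed P i) (e (Suc i)) > 0"
        using cA ip e_def by simp
      show "cross2 (Ed P i) (Ed P (Suc i)) * cross2 (Ed P i) (e (Suc i)) > 0"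
        using cs e_def by (auto simp: zero_less_mult_iff)
      show "\<forall>t>0. norm (Ed P i) \<le> norm (Ed P i + t *\<^sub>R e (Suc i))"
        using norm_grow[OF ii0] e_def by simp
    next
      fix t :: real assume t: "0 < t" "t < 1"
      have EQ: "Ed (Q t) k = (if k = i then e i + t *\<^sub>R e (Suc i) else if k = Suc i then (1 - t) *\<^sub>R e (Suc i) else e k)"
        if "Suc k < n" for k
        using that unfolding Q_def e_def n_def
        by (auto simp: Ed_upd Ed_def algebra_simps)
      have lQ: "length (Q t) = n" unfolding Q_def n_def by simp
      show "rel l t (e (Suc i)) i P (Q t) \<and> Q t ! 0 = P ! 0 \<and>
          Q t ! (length P - 1) = P ! (length P - 1) \<and> path_length (Q t) < path_length P"
      proof (intro conjI)
        show "rel l t (e (Suc i)) i P (Q t)"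
        proof (rule relI)
          show "length (Q t) = length P" using lQ n_def by simp
          show "Ed (Q t) k = Ed P i + t *\<^sub>R e (Suc i)" if "Suc k < length P" "k = i" for k
            using EQ[of k] that n_def e_def by simp
          show "\<exists>c>0. Ed (Q t) k = c *\<^sub>R Ed P k \<and> (c < 1 \<longrightarrow> norm (Ed P k) < l)"
            if "Suc k < length P" "k \<noteq> i" for k
          proof (cases "k = Suc i")
            case True
            then show ?thesis using EQ[of k] that t sh n_def e_def
              by (intro exI[of _ "1 - t"]) auto
          next
            case False
            then show ?thesis using EQ[of k] that n_def e_def by (intro ex1) simp
          qed
        qed
        show "Q t ! 0 = P ! 0" unfolding Q_def by simp
        show "Q t ! (length P - 1) = P ! (length P - 1)" using iN n_def unfolding Q_def by simp
        have "(\<Sum>k<n - 1. norm (Ed (Q t) k)) < (\<Sum>k<n - 1. norm (e k))"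
        proof (rule sum2[of i "Suc i"])
          show "i \<noteq> Suc i" "i < n - 1" "Suc i < n - 1" using iN by auto
          show "norm (Ed (Q t) k) = norm (e k)" if "k < n - 1" "k \<noteq> i" "k \<noteq> Suc i" for k
            using EQ[of k] that by simp
          have "cross2 (e i) (t *\<^sub>R e (Suc i)) \<noteq> 0" using cs t by (simp add: cross_scale)
          then have h1: "norm (e i + t *\<^sub>R e (Suc i)) < norm (e i) + norm (t *\<^sub>R e (Suc i))" by (rule strict_tri)
          have h2: "norm (t *\<^sub>R e (Suc i)) = t * norm (e (Suc i))" using t by simp
          have "Suc (Suc i) < n" "Suc i \<noteq> i" using iN by auto
          then have h3a: "Ed (Q t) (Suc i) = (1 - t) *\<^sub>R e (Suc i)" using EQ[of "Suc i"] by presburger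
          have h3: "norm (Ed (Q t) (Suc i)) = norm (e (Suc i)) - t * norm (e (Suc i))" unfolding h3a using t by (simp add: left_diff_distrib)
          have h4: "Ed (Q t) i = e i + t *\<^sub>R e (Suc i)" using EQ[of i] iN by simp
          show "norm (Ed (Q t) i) + norm (Ed (Q t) (Suc i)) < norm (e i) + norm (e (Suc i))"
            unfolding h3 h4 using h1 h2 by linarith
        qed
        then show "path_length (Q t) < path_length P" using pl[OF lQ] pl[of P] n_def e_def by simp
      qed
    qed
  qed
  have g: "eventually (\<lambda>t. \<forall>R'. rel l t T i P R' \<longrightarrow> dcc \<theta> l R') (at_right 0)"
  proof (rule gen[OF dP th assms(7) assms(8) infl0])
    show "cross2 (Ed P i) (Ed P (i - 1)) * cross2 (Ed P i) T > 0"
      using pos_prod_cancel[of "cross2 (e i) (e (Suc i))" "cross2 (e i) (e p)" "cross2 (e i) T"] cA adm ip e_def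
      by (simp add: mult.commute)
    show "cross2 (Ed P i) (Ed P (Suc i)) * cross2 (Ed P i) T > 0"
      using adm e_def by (simp add: mult.commute)
    show "(\<forall>t>0. norm (Ed P i) \<le> norm (Ed P i + t *\<^sub>R T)) \<or>
      (\<not> norm (Ed P (i - 1)) < l \<and> \<not> norm (Ed P (Suc i)) < l)"
      using s1 s2 ip e_def by simp
  qed
  then obtain b where b: "b > 0" "\<And>t. 0 < t \<Longrightarrow> t < b \<Longrightarrow> \<forall>R'. rel l t T i P R' \<longrightarrow> dcc \<theta> l R'"
    unfolding eventually_at_right_field by auto
  define \<epsilon> where "\<epsilon> = b / 2"
  have eps: "0 < \<epsilon>" "\<epsilon> < b" using b unfolding \<epsilon>_def by auto
  have iP: "i < length P" using assms(8) by simp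
  have "rel l \<epsilon> T i P (translate_from P i (\<epsilon> *\<^sub>R T))"
  proof (rule relI)
    show "length (translate_from P i (\<epsilon> *\<^sub>R T)) = length P" using length_translate[OF iP] .
    show "Ed (translate_from P i (\<epsilon> *\<^sub>R T)) k = Ed P i + \<epsilon> *\<^sub>R T" if "Suc k < length P" "k = i" for k
      using that iP by (simp add: Ed_def translate_nth)
    show "\<exists>c>0. Ed (translate_from P i (\<epsilon> *\<^sub>R T)) k = c *\<^sub>R Ed P k \<and> (c < 1 \<longrightarrow> norm (Ed P k) < l)"
      if "Suc k < length P" "k \<noteq> i" for k
      using that iP by (intro ex1) (auto simp: Ed_def translate_nth)
  qed
  then show ?thesis using b(2)[OF eps] eps(1) by blast
qed

end
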